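(* Let $B$ be a finite skew left brace and let $S$ be a maximal subbrace of $B$. Then either $\zeta(B)\subseteq S$, or $S$ is an ideal of $B$ and $B/S$ is an abelian brace whose group is cyclic of prime order.
   Context: A skew left brace (brace) is a set $B$ with two group structures $(B,+)$ and $(B,\cdot)$ with $a(b+c)=ab-a+ac$; $\lambda_a(b)=-a+ab$. A subbrace is a subset that is a subgroup of both groups; a maximal subbrace is a proper subbrace not contained in any other proper subbrace. An ideal is a subset that is a normal subgroup of both groups and $\lambda_b$-invariant for all $b$. The centre is $\zeta(B)=\{a\in B: a+b=b+a=ab=ba\ \forall b\in B\}$. A brace is abelian if $ab=a+b=b+a$ for all $a,b$. *)

theory Defs
  imports "HOL-Algebra.Algebra"
begin

text \<open>A skew left brace is given by two group structures A (the additive group (B,+),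
written with the HOL-Algebra monoid record) and M (the multiplicative group (B,.))
on the same carrier, satisfying a(b+c) = ab - a + ac.\<close>

definition skew_brace :: "'a monoid \<Rightarrow> 'a monoid \<Rightarrow> bool" where
  "skew_brace A M \<longleftrightarrow> group A \<and> group M \<and> carrier A = carrier M \<and>
     (\<forall>a\<in>carrier A. \<forall>b\<in>carrier A. \<forall>c\<in>carrier A.
        a \<otimes>\<^bsub>M\<^esub> (b \<otimes>\<^bsub>A\<^esub> c)
          = ((a \<otimes>\<^bsub>M\<^esub> b) \<otimes>\<^bsub>A\<^esub> inv\<^bsub>A\<^esub> a) \<otimes>\<^bsub>A\<^esub> (a \<otimes>\<^bsub>M\<^esub> c))"

definition brace_lambda :: "'a monoid \<Rightarrow> 'a monoid \<Rightarrow> 'a \<Rightarrow> 'a \<Rightarrow> 'a" where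
  "brace_lambda A M a b = inv\<^bsub>A\<^esub> a \<otimes>\<^bsub>A\<^esub> (a \<otimes>\<^bsub>M\<^esub> b)"

definition subbrace :: "'a set \<Rightarrow> 'a monoid \<Rightarrow> 'a monoid \<Rightarrow> bool" where
  "subbrace S A M \<longleftrightarrow> subgroup S A \<and> subgroup S M"

definition maximal_subbrace :: "'a set \<Rightarrow> 'a monoid \<Rightarrow> 'a monoid \<Rightarrow> bool" where
  "maximal_subbrace S A M \<longleftrightarrow> subbrace S A M \<and> S \<noteq> carrier A \<and>
     (\<forall>T. subbrace T A M \<and> T \<noteq> carrier A \<and> S \<subseteq> T \<longrightarrow> T = S)"

definition brace_ideal :: "'a set \<Rightarrow> 'a monoid \<Rightarrow> 'a monoid \<Rightarrow> bool" where
  "brace_ideal I A M \<longleftrightarrow> normal I A \<and> normal I M \<and>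
     (\<forall>b\<in>carrier A. \<forall>x\<in>I. brace_lambda A M b x \<in> I)"

definition brace_centre :: "'a monoid \<Rightarrow> 'a monoid \<Rightarrow> 'a set" where
  "brace_centre A M = {a \<in> carrier A. \<forall>b\<in>carrier A.
      a \<otimes>\<^bsub>A\<^esub> b = b \<otimes>\<^bsub>A\<^esub> a \<and> b \<otimes>\<^bsub>A\<^esub> a = a \<otimes>\<^bsub>M\<^esub> b \<and>
      a \<otimes>\<^bsub>M\<^esub> b = b \<otimes>\<^bsub>M\<^esub> a}"

definition abelian_brace :: "'a monoid \<Rightarrow> 'a monoid \<Rightarrow> bool" where
  "abelian_brace A M \<longleftrightarrow> skew_brace A M \<and>
     (\<forall>a\<in>carrier A. \<forall>b\<in>carrier A.
        a \<otimes>\<^bsub>M\<^esub> b = a \<otimes>\<^bsub>A\<^esub> b \<and> a \<otimes>\<^bsub>A\<^esub> b = b \<otimes>\<^bsub>A\<^esub> a)"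

end

theory Submission imports Defs begin

locale bra = A: group A + M: group M for A :: "'a monoid" and M :: "'a monoid" +
  assumes carr: "carrier M = carrier A"
begin

definition C where "C w \<longleftrightarrow> w \<in> carrier A \<and> (\<forall>b\<in>carrier A.
   w \<otimes>\<^bsub>A\<^esub> b = b \<otimes>\<^bsub>A\<^esub> w \<and> w \<otimes>\<^bsub>M\<^esub> b = w \<otimes>\<^bsub>A\<^esub> b \<and> w \<otimes>\<^bsub>M\<^esub> b = b \<otimes>\<^bsub>M\<^esub> w)"

lemma C_carr: "C w \<Longrightarrow> w \<in> carrier A" by (simp add: C_def)
lemma C_Acomm: "C w \<Longrightarrow> b \<in> carrier A \<Longrightarrow> w \<otimes>\<^bsub>A\<^esub> b = b \<otimes>\<^bsub>A\<^esub> w" by (simp add: C_def)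
lemma C_MA: "C w \<Longrightarrow> b \<in> carrier A \<Longrightarrow> w \<otimes>\<^bsub>M\<^esub> b = w \<otimes>\<^bsub>A\<^esub> b" by (simp add: C_def)
lemma C_Mcomm: "C w \<Longrightarrow> b \<in> carrier A \<Longrightarrow> w \<otimes>\<^bsub>M\<^esub> b = b \<otimes>\<^bsub>M\<^esub> w" unfolding C_def by blast
lemma C_MA': "C w \<Longrightarrow> b \<in> carrier A \<Longrightarrow> b \<otimes>\<^bsub>M\<^esub> w = b \<otimes>\<^bsub>A\<^esub> w"
  using C_Mcomm C_MA C_Acomm by metis

lemma C_one: assumes "C w" shows "\<one>\<^bsub>M\<^esub> = \<one>\<^bsub>A\<^esub>"
proof -
  have w: "w \<in> carrier A" using assms C_carr by blast
  have o: "\<one>\<^bsub>M\<^esub> \<in> carrier A" using carr M.one_closed by simp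
  have "w \<otimes>\<^bsub>A\<^esub> \<one>\<^bsub>M\<^esub> = w \<otimes>\<^bsub>M\<^esub> \<one>\<^bsub>M\<^esub>"
    by (rule C_MA[OF assms o, symmetric])
  also have "\<dots> = w" using w carr by simp
  finally show ?thesis using w carr M.one_closed by (metis A.l_cancel_one)
qed

lemma C_mult: assumes u: "C u" and v: "C v" shows "C (u \<otimes>\<^bsub>A\<^esub> v)"
proof -
  have uc: "u \<in> carrier A" and vc: "v \<in> carrier A" using u v C_carr by auto
  { fix b assume b: "b \<in> carrier A"
    have 1: "(u \<otimes>\<^bsub>A\<^esub> v) \<otimes>\<^bsub>A\<^esub> b = b \<otimes>\<^bsub>A\<^esub> (u \<otimes>\<^bsub>A\<^esub> v)"
      using b uc vc C_Acomm[OF u] C_Acomm[OF v] by (metis A.m_assoc A.m_closed)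
    have uv: "u \<otimes>\<^bsub>A\<^esub> v = u \<otimes>\<^bsub>M\<^esub> v" using C_MA[OF u vc] by simp
    have 2: "(u \<otimes>\<^bsub>A\<^esub> v) \<otimes>\<^bsub>M\<^esub> b = (u \<otimes>\<^bsub>A\<^esub> v) \<otimes>\<^bsub>A\<^esub> b"
    proof -
      have "(u \<otimes>\<^bsub>A\<^esub> v) \<otimes>\<^bsub>M\<^esub> b = u \<otimes>\<^bsub>M\<^esub> (v \<otimes>\<^bsub>M\<^esub> b)"
        using uv M.m_assoc uc vc b carr by simp
      also have "\<dots> = u \<otimes>\<^bsub>A\<^esub> (v \<otimes>\<^bsub>A\<^esub> b)" using C_MA[OF u] C_MA[OF v] b vc by simp
      finally show ?thesis using A.m_assoc uc vc b by simp
    qed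
    have 3: "(u \<otimes>\<^bsub>A\<^esub> v) \<otimes>\<^bsub>M\<^esub> b = b \<otimes>\<^bsub>M\<^esub> (u \<otimes>\<^bsub>A\<^esub> v)"
    proof -
      have "b \<otimes>\<^bsub>M\<^esub> (u \<otimes>\<^bsub>A\<^esub> v) = (b \<otimes>\<^bsub>M\<^esub> u) \<otimes>\<^bsub>M\<^esub> v"
        using uv M.m_assoc uc vc b carr by simp
      also have "\<dots> = (u \<otimes>\<^bsub>M\<^esub> b) \<otimes>\<^bsub>M\<^esub> v" using C_Mcomm[OF u b] by simp
      also have "\<dots> = u \<otimes>\<^bsub>M\<^esub> (v \<otimes>\<^bsub>M\<^esub> b)" using C_Mcomm[OF v b] M.m_assoc uc vc b carr by simp
      also have "\<dots> = (u \<otimes>\<^bsub>A\<^esub> v) \<otimes>\<^bsub>M\<^esub> b" using uv M.m_assoc uc vc b carr by simp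
      finally show ?thesis by simp
    qed
    note 1 2 3 }
  then show ?thesis unfolding C_def using uc vc by auto
qed

lemma C_pow: assumes "C w" shows "C (w [^]\<^bsub>A\<^esub> (n::nat))"
proof (induction n)
  case 0
  have "C \<one>\<^bsub>A\<^esub>" unfolding C_def using C_one[OF assms] carr by (auto, metis M.l_one M.r_one carr)
  then show ?case by simp
next
  case (Suc n)
  then show ?case using C_mult[OF Suc assms] by simp
qed

lemma MM: assumes u: "C u" and v: "C v" and t: "t \<in> carrier A" and t': "t' \<in> carrier A"
  shows "(t \<otimes>\<^bsub>A\<^esub> u) \<otimes>\<^bsub>M\<^esub> (t' \<otimes>\<^bsub>A\<^esub> v) = (t \<otimes>\<^bsub>M\<^esub> t') \<otimes>\<^bsub>A\<^esub> (u \<otimes>\<^bsub>A\<^esub> v)"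
proof -
  have uc: "u \<in> carrier M" and vc: "v \<in> carrier M" and tc: "t \<in> carrier M" and t'c: "t' \<in> carrier M"
    using u v t t' C_carr carr by auto
  have "(t \<otimes>\<^bsub>A\<^esub> u) \<otimes>\<^bsub>M\<^esub> (t' \<otimes>\<^bsub>A\<^esub> v) = (t \<otimes>\<^bsub>M\<^esub> u) \<otimes>\<^bsub>M\<^esub> (t' \<otimes>\<^bsub>M\<^esub> v)"
    using C_MA'[OF u t] C_MA'[OF v t'] by simp
  also have "\<dots> = t \<otimes>\<^bsub>M\<^esub> (u \<otimes>\<^bsub>M\<^esub> (t' \<otimes>\<^bsub>M\<^esub> v))" using uc vc tc t'c M.m_assoc by simp
  also have "\<dots> = t \<otimes>\<^bsub>M\<^esub> ((t' \<otimes>\<^bsub>M\<^esub> v) \<otimes>\<^bsub>M\<^esub> u)"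
    using C_Mcomm[OF u, of "t' \<otimes>\<^bsub>M\<^esub> v"] M.m_closed[OF t'c vc] carr by simp
  also have "\<dots> = (t \<otimes>\<^bsub>M\<^esub> t') \<otimes>\<^bsub>M\<^esub> (v \<otimes>\<^bsub>M\<^esub> u)" using uc vc tc t'c M.m_assoc by simp
  also have "v \<otimes>\<^bsub>M\<^esub> u = u \<otimes>\<^bsub>A\<^esub> v" using C_Mcomm[OF v] C_MA[OF u] uc vc carr by auto
  also have "(t \<otimes>\<^bsub>M\<^esub> t') \<otimes>\<^bsub>M\<^esub> (u \<otimes>\<^bsub>A\<^esub> v) = (t \<otimes>\<^bsub>M\<^esub> t') \<otimes>\<^bsub>A\<^esub> (u \<otimes>\<^bsub>A\<^esub> v)"
    using C_MA'[OF C_mult[OF u v], of "t \<otimes>\<^bsub>M\<^esub> t'"] M.m_closed[OF tc t'c] carr by simp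
  finally show ?thesis .
qed

lemma AA: assumes u: "C u" and v: "C v" and t: "t \<in> carrier A" and t': "t' \<in> carrier A"
  shows "(t \<otimes>\<^bsub>A\<^esub> u) \<otimes>\<^bsub>A\<^esub> (t' \<otimes>\<^bsub>A\<^esub> v) = (t \<otimes>\<^bsub>A\<^esub> t') \<otimes>\<^bsub>A\<^esub> (u \<otimes>\<^bsub>A\<^esub> v)"
proof -
  have uc: "u \<in> carrier A" and vc: "v \<in> carrier A" using u v C_carr by auto
  have "(t \<otimes>\<^bsub>A\<^esub> u) \<otimes>\<^bsub>A\<^esub> (t' \<otimes>\<^bsub>A\<^esub> v) = t \<otimes>\<^bsub>A\<^esub> ((u \<otimes>\<^bsub>A\<^esub> t') \<otimes>\<^bsub>A\<^esub> v)"
    using uc vc t t' A.m_assoc by simp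
  also have "\<dots> = t \<otimes>\<^bsub>A\<^esub> ((t' \<otimes>\<^bsub>A\<^esub> u) \<otimes>\<^bsub>A\<^esub> v)" using C_Acomm[OF u t'] by simp
  finally show ?thesis using uc vc t t' A.m_assoc by simp
qed

lemma C_invM: assumes "C w" shows "inv\<^bsub>M\<^esub> w = inv\<^bsub>A\<^esub> w"
proof -
  have w: "w \<in> carrier A" using assms C_carr by auto
  have "inv\<^bsub>A\<^esub> w \<otimes>\<^bsub>M\<^esub> w = \<one>\<^bsub>M\<^esub>"
    using C_MA'[OF assms, of "inv\<^bsub>A\<^esub> w"] w C_one[OF assms] by simp
  then show ?thesis using M.inv_equality w carr by auto
qed

end

locale braS = bra +
  fixes S
  assumes fin: "finite (carrier A)" and SA: "subgroup S A" and SM: "subgroup S M"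
begin

lemma S_carr: "S \<subseteq> carrier A" using SA subgroup.subset by blast

lemma S_pow: "s \<in> S \<Longrightarrow> s [^]\<^bsub>A\<^esub> (n::nat) \<in> S"
  by (induction n) (auto simp: subgroup.one_closed[OF SA] subgroup.m_closed[OF SA])

lemma ord_pos: "order A > 0"
  unfolding order_def using fin A.one_closed card_gt_0_iff by blast

lemma C_inv: assumes "C w" shows "inv\<^bsub>A\<^esub> w = w [^]\<^bsub>A\<^esub> (order A - 1)"
proof -
  have w: "w \<in> carrier A" using assms C_carr by auto
  have "w [^]\<^bsub>A\<^esub> (order A - 1) \<otimes>\<^bsub>A\<^esub> w = w [^]\<^bsub>A\<^esub> (Suc (order A - 1))" by simp
  also have "\<dots> = \<one>\<^bsub>A\<^esub>" using ord_pos A.pow_order_eq_1[OF w] by simp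
  finally show ?thesis using A.inv_equality w by auto
qed

definition T where "T w = {s \<otimes>\<^bsub>A\<^esub> (w [^]\<^bsub>A\<^esub> (k::nat)) | s k. s \<in> S}"

lemma T_sub: assumes w: "C w" shows "subgroup (T w) A" "subgroup (T w) M"
proof -
  have wc: "w \<in> carrier A" using w C_carr by auto
  have TA: "T w \<subseteq> carrier A" unfolding T_def using S_carr wc by auto
  have one: "\<one>\<^bsub>A\<^esub> \<in> T w" unfolding T_def
    using subgroup.one_closed[OF SA] by (auto intro!: exI[of _ "\<one>\<^bsub>A\<^esub>"] exI[of _ 0])
  show "subgroup (T w) A"
  proof (rule A.subgroupI[OF TA])
    show "T w \<noteq> {}" using one by auto
  next
    fix a assume "a \<in> T w"
    then obtain s and k :: nat where s: "s \<in> S" and a: "a = s \<otimes>\<^bsub>A\<^esub> w [^]\<^bsub>A\<^esub> k" unfolding T_def by blast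
    have sc: "s \<in> carrier A" using s S_carr by auto
    have Cu: "C (w [^]\<^bsub>A\<^esub> k)" using C_pow[OF w] .
    have Ci: "C (inv\<^bsub>A\<^esub> (w [^]\<^bsub>A\<^esub> k))" using C_pow[OF Cu] C_inv[OF Cu] by simp
    have "inv\<^bsub>A\<^esub> a = inv\<^bsub>A\<^esub> (w [^]\<^bsub>A\<^esub> k) \<otimes>\<^bsub>A\<^esub> inv\<^bsub>A\<^esub> s"
      using a sc wc A.inv_mult_group by simp
    also have "\<dots> = inv\<^bsub>A\<^esub> s \<otimes>\<^bsub>A\<^esub> inv\<^bsub>A\<^esub> (w [^]\<^bsub>A\<^esub> k)"
      using C_Acomm[OF Ci, of "inv\<^bsub>A\<^esub> s"] sc by simp
    also have "\<dots> = inv\<^bsub>A\<^esub> s \<otimes>\<^bsub>A\<^esub> w [^]\<^bsub>A\<^esub> (k * (order A - 1))"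
      using C_inv[OF Cu] wc A.nat_pow_pow by simp
    finally show "inv\<^bsub>A\<^esub> a \<in> T w" unfolding T_def using subgroup.m_inv_closed[OF SA s] by blast
  next
    fix a b assume "a \<in> T w" "b \<in> T w"
    then obtain s t and k j :: nat where s: "s \<in> S" and a: "a = s \<otimes>\<^bsub>A\<^esub> w [^]\<^bsub>A\<^esub> k"
      and t: "t \<in> S" and b: "b = t \<otimes>\<^bsub>A\<^esub> w [^]\<^bsub>A\<^esub> j" unfolding T_def by blast
    have "a \<otimes>\<^bsub>A\<^esub> b = (s \<otimes>\<^bsub>A\<^esub> t) \<otimes>\<^bsub>A\<^esub> w [^]\<^bsub>A\<^esub> (k + j)"
      using AA[OF C_pow[OF w] C_pow[OF w], of s t] s t S_carr a b wc A.nat_pow_mult by auto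
    then show "a \<otimes>\<^bsub>A\<^esub> b \<in> T w" unfolding T_def using subgroup.m_closed[OF SA s t] by blast
  qed
  show "subgroup (T w) M"
  proof (rule M.subgroupI)
    show "T w \<subseteq> carrier M" using TA carr by simp
    show "T w \<noteq> {}" using one by auto
  next
    fix a assume "a \<in> T w"
    then obtain s and k :: nat where s: "s \<in> S" and a: "a = s \<otimes>\<^bsub>A\<^esub> w [^]\<^bsub>A\<^esub> k" unfolding T_def by blast
    have sc: "s \<in> carrier A" using s S_carr by auto
    have Cu: "C (w [^]\<^bsub>A\<^esub> k)" using C_pow[OF w] .
    have Ci: "C (inv\<^bsub>A\<^esub> (w [^]\<^bsub>A\<^esub> k))" using C_pow[OF Cu] C_inv[OF Cu] by simp
    have isc: "inv\<^bsub>M\<^esub> s \<in> carrier A" using subgroup.m_inv_closed[OF SM s] S_carr by auto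
    have "a = s \<otimes>\<^bsub>M\<^esub> w [^]\<^bsub>A\<^esub> k" using a C_MA'[OF Cu sc] by simp
    then have "inv\<^bsub>M\<^esub> a = inv\<^bsub>M\<^esub> (w [^]\<^bsub>A\<^esub> k) \<otimes>\<^bsub>M\<^esub> inv\<^bsub>M\<^esub> s"
      using sc wc carr M.inv_mult_group by simp
    also have "\<dots> = inv\<^bsub>A\<^esub> (w [^]\<^bsub>A\<^esub> k) \<otimes>\<^bsub>M\<^esub> inv\<^bsub>M\<^esub> s" using C_invM[OF Cu] by simp
    also have "\<dots> = inv\<^bsub>M\<^esub> s \<otimes>\<^bsub>A\<^esub> inv\<^bsub>A\<^esub> (w [^]\<^bsub>A\<^esub> k)"
      using C_MA[OF Ci isc] C_Acomm[OF Ci isc] by simp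
    also have "\<dots> = inv\<^bsub>M\<^esub> s \<otimes>\<^bsub>A\<^esub> w [^]\<^bsub>A\<^esub> (k * (order A - 1))"
      using C_inv[OF Cu] wc A.nat_pow_pow by simp
    finally show "inv\<^bsub>M\<^esub> a \<in> T w" unfolding T_def using subgroup.m_inv_closed[OF SM s] by blast
  next
    fix a b assume "a \<in> T w" "b \<in> T w"
    then obtain s t and k j :: nat where s: "s \<in> S" and a: "a = s \<otimes>\<^bsub>A\<^esub> w [^]\<^bsub>A\<^esub> k"
      and t: "t \<in> S" and b: "b = t \<otimes>\<^bsub>A\<^esub> w [^]\<^bsub>A\<^esub> j" unfolding T_def by blast
    have "a \<otimes>\<^bsub>M\<^esub> b = (s \<otimes>\<^bsub>M\<^esub> t) \<otimes>\<^bsub>A\<^esub> w [^]\<^bsub>A\<^esub> (k + j)"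
      using MM[OF C_pow[OF w] C_pow[OF w], of s t] s t S_carr a b wc A.nat_pow_mult by auto
    then show "a \<otimes>\<^bsub>M\<^esub> b \<in> T w" unfolding T_def using subgroup.m_closed[OF SM s t] by blast
  qed
qed

lemma S_cancelL: "x \<in> S \<Longrightarrow> y \<in> carrier A \<Longrightarrow> x \<otimes>\<^bsub>A\<^esub> y \<in> S \<Longrightarrow> y \<in> S"
proof -
  assume x: "x \<in> S" and y: "y \<in> carrier A" and xy: "x \<otimes>\<^bsub>A\<^esub> y \<in> S"
  have xc: "x \<in> carrier A" using x S_carr by auto
  have "inv\<^bsub>A\<^esub> x \<otimes>\<^bsub>A\<^esub> (x \<otimes>\<^bsub>A\<^esub> y) = y" using xc y by (simp add: A.m_assoc[symmetric])
  moreover have "inv\<^bsub>A\<^esub> x \<otimes>\<^bsub>A\<^esub> (x \<otimes>\<^bsub>A\<^esub> y) \<in> S"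
    using subgroup.m_closed[OF SA subgroup.m_inv_closed[OF SA x] xy] .
  ultimately show ?thesis by simp
qed

lemma S_cancelR: "y \<in> carrier A \<Longrightarrow> x \<in> S \<Longrightarrow> y \<otimes>\<^bsub>A\<^esub> x \<in> S \<Longrightarrow> y \<in> S"
proof -
  assume x: "x \<in> S" and y: "y \<in> carrier A" and xy: "y \<otimes>\<^bsub>A\<^esub> x \<in> S"
  have xc: "x \<in> carrier A" using x S_carr by auto
  have "(y \<otimes>\<^bsub>A\<^esub> x) \<otimes>\<^bsub>A\<^esub> inv\<^bsub>A\<^esub> x = y" using xc y by (simp add: A.m_assoc)
  moreover have "(y \<otimes>\<^bsub>A\<^esub> x) \<otimes>\<^bsub>A\<^esub> inv\<^bsub>A\<^esub> x \<in> S"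
    using subgroup.m_closed[OF SA xy subgroup.m_inv_closed[OF SA x]] .
  ultimately show ?thesis by simp
qed

lemma S_T: "C w \<Longrightarrow> S \<subseteq> T w"
  unfolding T_def using S_carr by (force intro: exI[of _ "0::nat"])

lemma w_T: "C w \<Longrightarrow> w \<in> T w"
  unfolding T_def using subgroup.one_closed[OF SA] C_carr
  by (force intro!: exI[of _ "\<one>\<^bsub>A\<^esub>"] exI[of _ "1::nat"])

end

locale braZ = braS +
  fixes z
  assumes maxS: "\<And>U. subgroup U A \<Longrightarrow> subgroup U M \<Longrightarrow> U \<noteq> carrier A \<Longrightarrow> S \<subseteq> U \<Longrightarrow> U = S"
    and Cz: "C z" and zS: "z \<notin> S"
begin

lemma zc: "z \<in> carrier A" using Cz C_carr by auto

lemma Tmax: assumes "C w" "w \<notin> S" shows "T w = carrier A"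
proof (rule ccontr)
  assume "T w \<noteq> carrier A"
  then have "T w = S" using maxS[OF T_sub[OF assms(1)]] S_T[OF assms(1)] by blast
  then show False using w_T[OF assms(1)] assms(2) by blast
qed

definition m :: nat where "m = (LEAST k::nat. 0 < k \<and> z [^]\<^bsub>A\<^esub> k \<in> S)"

lemma m_props: "0 < m" "z [^]\<^bsub>A\<^esub> m \<in> S"
proof -
  have "0 < order A \<and> z [^]\<^bsub>A\<^esub> order A \<in> S"
    using ord_pos A.pow_order_eq_1[OF zc] subgroup.one_closed[OF SA] by simp
  then have "0 < m \<and> z [^]\<^bsub>A\<^esub> m \<in> S" unfolding m_def by (rule LeastI)
  then show "0 < m" "z [^]\<^bsub>A\<^esub> m \<in> S" by auto
qed

lemma pow_split: "z [^]\<^bsub>A\<^esub> (n::nat) = (z [^]\<^bsub>A\<^esub> m) [^]\<^bsub>A\<^esub> (n div m) \<otimes>\<^bsub>A\<^esub> z [^]\<^bsub>A\<^esub> (n mod m)"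
proof -
  have "z [^]\<^bsub>A\<^esub> n = z [^]\<^bsub>A\<^esub> (m * (n div m) + n mod m)" by simp
  also have "\<dots> = (z [^]\<^bsub>A\<^esub> m) [^]\<^bsub>A\<^esub> (n div m) \<otimes>\<^bsub>A\<^esub> z [^]\<^bsub>A\<^esub> (n mod m)"
    using A.nat_pow_mult[OF zc] A.nat_pow_pow[OF zc] by simp
  finally show ?thesis .
qed

lemma m_dvd: assumes "z [^]\<^bsub>A\<^esub> (k::nat) \<in> S" shows "m dvd k"
proof -
  have q: "(z [^]\<^bsub>A\<^esub> m) [^]\<^bsub>A\<^esub> (k div m) \<in> S" using S_pow m_props by simp
  have r: "z [^]\<^bsub>A\<^esub> (k mod m) \<in> S"
  proof -
    have "(z [^]\<^bsub>A\<^esub> m) [^]\<^bsub>A\<^esub> (k div m) \<otimes>\<^bsub>A\<^esub> z [^]\<^bsub>A\<^esub> (k mod m) \<in> S"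
      using assms pow_split[of k] by simp
    then show ?thesis using S_cancelL[OF q] zc by simp
  qed
  show ?thesis
  proof (rule ccontr)
    assume "\<not> m dvd k"
    then have "0 < k mod m" by (simp add: mod_greater_zero_iff_not_dvd)
    moreover have "\<forall>j::nat. 0 < j \<and> z [^]\<^bsub>A\<^esub> j \<in> S \<longrightarrow> m \<le> j"
      unfolding m_def by (auto intro: Least_le)
    ultimately have "m \<le> k mod m" using r by blast
    moreover have "k mod m < m" using m_props by simp
    ultimately show False by simp
  qed
qed

lemma m_ne1: "m \<noteq> 1"
proof
  assume "m = 1"
  then have "z [^]\<^bsub>A\<^esub> (1::nat) \<in> S" using m_props(2) by simp
  then show False using zS zc by simp
qed

lemma m_prime: "Factorial_Ring.prime m"
proof -
  obtain p where p: "Factorial_Ring.prime p" "p dvd m" using prime_factor_nat[OF m_ne1] by blast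
  have "z [^]\<^bsub>A\<^esub> p \<in> S"
  proof (rule ccontr)
    assume nS: "z [^]\<^bsub>A\<^esub> p \<notin> S"
    have Cp: "C (z [^]\<^bsub>A\<^esub> p)" using C_pow[OF Cz] .
    have "z \<in> T (z [^]\<^bsub>A\<^esub> p)" using Tmax[OF Cp nS] zc by simp
    then obtain s and n :: nat where s: "s \<in> S" and zz: "z = s \<otimes>\<^bsub>A\<^esub> (z [^]\<^bsub>A\<^esub> p) [^]\<^bsub>A\<^esub> n"
      unfolding T_def by blast
    have sc: "s \<in> carrier A" using s S_carr by auto
    have zz2: "z = s \<otimes>\<^bsub>A\<^esub> z [^]\<^bsub>A\<^esub> (p * n)" using zz A.nat_pow_pow[OF zc] by simp
    show False
    proof (cases "p * n")
      case 0
      then have "z = s" using zz2 sc by (metis A.nat_pow_0 A.r_one)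
      then show ?thesis using zS s by simp
    next
      case (Suc r)
      then have "z = (s \<otimes>\<^bsub>A\<^esub> z [^]\<^bsub>A\<^esub> r) \<otimes>\<^bsub>A\<^esub> z" using zz2 sc zc by (simp add: A.m_assoc)
      then have "s \<otimes>\<^bsub>A\<^esub> z [^]\<^bsub>A\<^esub> r = \<one>\<^bsub>A\<^esub>" using sc zc
        by (metis A.m_closed A.nat_pow_closed A.r_cancel_one')
      then have "z [^]\<^bsub>A\<^esub> r \<in> S" using S_cancelL[OF s] subgroup.one_closed[OF SA] zc by simp
      then have "m dvd r" by (rule m_dvd)
      then have "p dvd r" using p(2) by (rule dvd_trans[rotated])
      moreover have "p dvd Suc r" using Suc by (metis dvd_triv_left)
      ultimately have "p dvd 1" by (metis dvd_diff_nat diff_Suc_1 Suc_eq_plus1 add_diff_cancel_left')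
      then show False using p(1) by simp
    qed
  qed
  then have "m dvd p" by (rule m_dvd)
  then have "m = p" using p by (simp add: dvd_antisym)
  then show ?thesis using p by simp
qed

lemma decomp: assumes b: "b \<in> carrier A" shows "\<exists>t\<in>S. \<exists>k<m. b = t \<otimes>\<^bsub>A\<^esub> z [^]\<^bsub>A\<^esub> k"
proof -
  have "b \<in> T z" using Tmax[OF Cz zS] b by simp
  then obtain s and n :: nat where s: "s \<in> S" and bb: "b = s \<otimes>\<^bsub>A\<^esub> z [^]\<^bsub>A\<^esub> n"
    unfolding T_def by blast
  have q: "(z [^]\<^bsub>A\<^esub> m) [^]\<^bsub>A\<^esub> (n div m) \<in> S" using S_pow m_props by simp
  have "b = (s \<otimes>\<^bsub>A\<^esub> (z [^]\<^bsub>A\<^esub> m) [^]\<^bsub>A\<^esub> (n div m)) \<otimes>\<^bsub>A\<^esub> z [^]\<^bsub>A\<^esub> (n mod m)"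
    using bb pow_split[of n] s S_carr zc by (simp add: A.m_assoc subsetD)
  moreover have "n mod m < m" using m_props by simp
  ultimately show ?thesis using subgroup.m_closed[OF SA s q]
    by (intro bexI[of _ "s \<otimes>\<^bsub>A\<^esub> (z [^]\<^bsub>A\<^esub> m) [^]\<^bsub>A\<^esub> (n div m)"] exI[of _ "n mod m"]) simp_all
qed

lemma decompC: assumes b: "b \<in> carrier A" shows "\<exists>t\<in>S. \<exists>u. C u \<and> b = t \<otimes>\<^bsub>A\<^esub> u"
  using decomp[OF b] C_pow[OF Cz] by blast

lemma conjA: assumes u: "C u" and t: "t \<in> carrier A" and h: "h \<in> carrier A"
  shows "(t \<otimes>\<^bsub>A\<^esub> u) \<otimes>\<^bsub>A\<^esub> h \<otimes>\<^bsub>A\<^esub> inv\<^bsub>A\<^esub> (t \<otimes>\<^bsub>A\<^esub> u) = t \<otimes>\<^bsub>A\<^esub> h \<otimes>\<^bsub>A\<^esub> inv\<^bsub>A\<^esub> t"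
proof -
  have uc: "u \<in> carrier A" using u C_carr by auto
  have "(t \<otimes>\<^bsub>A\<^esub> u) \<otimes>\<^bsub>A\<^esub> h = (t \<otimes>\<^bsub>A\<^esub> h) \<otimes>\<^bsub>A\<^esub> u"
    using C_Acomm[OF u h] t h uc by (simp add: A.m_assoc)
  moreover have c: "\<And>y. y \<in> carrier A \<Longrightarrow> u \<otimes>\<^bsub>A\<^esub> (inv\<^bsub>A\<^esub> u \<otimes>\<^bsub>A\<^esub> y) = y"
    using uc by (simp add: A.m_assoc[symmetric])
  ultimately show ?thesis using t h uc by (simp add: A.inv_mult_group A.m_assoc)
qed

lemma conjM: assumes u: "C u" and t: "t \<in> carrier A" and h: "h \<in> carrier A"
  shows "(t \<otimes>\<^bsub>M\<^esub> u) \<otimes>\<^bsub>M\<^esub> h \<otimes>\<^bsub>M\<^esub> inv\<^bsub>M\<^esub> (t \<otimes>\<^bsub>M\<^esub> u) = t \<otimes>\<^bsub>M\<^esub> h \<otimes>\<^bsub>M\<^esub> inv\<^bsub>M\<^esub> t"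
proof -
  have uc: "u \<in> carrier M" using u C_carr carr by auto
  have t': "t \<in> carrier M" "h \<in> carrier M" using t h carr by auto
  have "(t \<otimes>\<^bsub>M\<^esub> u) \<otimes>\<^bsub>M\<^esub> h = (t \<otimes>\<^bsub>M\<^esub> h) \<otimes>\<^bsub>M\<^esub> u"
    using C_Mcomm[OF u h] t' uc by (simp add: M.m_assoc)
  moreover have c: "\<And>y. y \<in> carrier M \<Longrightarrow> u \<otimes>\<^bsub>M\<^esub> (inv\<^bsub>M\<^esub> u \<otimes>\<^bsub>M\<^esub> y) = y"
    using uc by (simp add: M.m_assoc[symmetric])
  ultimately show ?thesis using t' uc by (simp add: M.inv_mult_group M.m_assoc)
qed

lemma lamA: assumes u: "C u" and t: "t \<in> carrier A" and h: "h \<in> carrier A"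
  shows "brace_lambda A M (t \<otimes>\<^bsub>A\<^esub> u) h = inv\<^bsub>A\<^esub> t \<otimes>\<^bsub>A\<^esub> (t \<otimes>\<^bsub>M\<^esub> h)"
proof -
  have uc: "u \<in> carrier A" using u C_carr by auto
  have th: "t \<otimes>\<^bsub>M\<^esub> h \<in> carrier A" using t h carr M.m_closed by auto
  have x: "t \<otimes>\<^bsub>A\<^esub> u = u \<otimes>\<^bsub>M\<^esub> t" using C_Acomm[OF u t] C_MA[OF u t] by simp
  have "(t \<otimes>\<^bsub>A\<^esub> u) \<otimes>\<^bsub>M\<^esub> h = u \<otimes>\<^bsub>A\<^esub> (t \<otimes>\<^bsub>M\<^esub> h)"
    using x M.m_assoc t h uc carr C_MA[OF u th] by simp
  moreover have "inv\<^bsub>A\<^esub> (t \<otimes>\<^bsub>A\<^esub> u) = inv\<^bsub>A\<^esub> t \<otimes>\<^bsub>A\<^esub> inv\<^bsub>A\<^esub> u"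
    by (metis C_Acomm[OF u t] A.inv_mult_group uc t)
  moreover have "inv\<^bsub>A\<^esub> u \<otimes>\<^bsub>A\<^esub> (u \<otimes>\<^bsub>A\<^esub> (t \<otimes>\<^bsub>M\<^esub> h)) = t \<otimes>\<^bsub>M\<^esub> h"
    using uc th by (simp add: A.m_assoc[symmetric])
  ultimately show ?thesis unfolding brace_lambda_def using t uc th by (simp add: A.m_assoc)
qed

lemma nA: "normal S A"
proof -
  have "\<forall>x\<in>carrier A. \<forall>h\<in>S. x \<otimes>\<^bsub>A\<^esub> h \<otimes>\<^bsub>A\<^esub> inv\<^bsub>A\<^esub> x \<in> S"
  proof (intro ballI)
    fix x h assume x: "x \<in> carrier A" and h: "h \<in> S"
    obtain t u where t: "t \<in> S" and u: "C u" and xx: "x = t \<otimes>\<^bsub>A\<^esub> u" using decompC[OF x] by blast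
    have "x \<otimes>\<^bsub>A\<^esub> h \<otimes>\<^bsub>A\<^esub> inv\<^bsub>A\<^esub> x = t \<otimes>\<^bsub>A\<^esub> h \<otimes>\<^bsub>A\<^esub> inv\<^bsub>A\<^esub> t"
      using conjA[OF u, of t h] xx t h S_carr by auto
    then show "x \<otimes>\<^bsub>A\<^esub> h \<otimes>\<^bsub>A\<^esub> inv\<^bsub>A\<^esub> x \<in> S"
      using t h SA by (simp add: subgroup.m_closed subgroup.m_inv_closed)
  qed
  then show ?thesis using A.normal_inv_iff SA by blast
qed

lemma nM: "normal S M"
proof -
  have "\<forall>x\<in>carrier M. \<forall>h\<in>S. x \<otimes>\<^bsub>M\<^esub> h \<otimes>\<^bsub>M\<^esub> inv\<^bsub>M\<^esub> x \<in> S"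
  proof (intro ballI)
    fix x h assume x: "x \<in> carrier M" and h: "h \<in> S"
    obtain t u where t: "t \<in> S" and u: "C u" and xx: "x = t \<otimes>\<^bsub>A\<^esub> u" using decompC x carr by blast
    have tc: "t \<in> carrier A" using t S_carr by auto
    have xx': "x = t \<otimes>\<^bsub>M\<^esub> u" using xx C_MA'[OF u tc] by simp
    have "x \<otimes>\<^bsub>M\<^esub> h \<otimes>\<^bsub>M\<^esub> inv\<^bsub>M\<^esub> x = t \<otimes>\<^bsub>M\<^esub> h \<otimes>\<^bsub>M\<^esub> inv\<^bsub>M\<^esub> t"
      using conjM[OF u, of t h] xx' tc h S_carr by auto
    then show "x \<otimes>\<^bsub>M\<^esub> h \<otimes>\<^bsub>M\<^esub> inv\<^bsub>M\<^esub> x \<in> S"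
      using t h SM by (simp add: subgroup.m_closed subgroup.m_inv_closed)
  qed
  then show ?thesis using M.normal_inv_iff SM by blast
qed

lemma ideal: "brace_ideal S A M"
  unfolding brace_ideal_def
proof (intro conjI nA nM ballI)
  fix b x assume b: "b \<in> carrier A" and x: "x \<in> S"
  obtain t u where t: "t \<in> S" and u: "C u" and bb: "b = t \<otimes>\<^bsub>A\<^esub> u" using decompC[OF b] by blast
  have "brace_lambda A M b x = inv\<^bsub>A\<^esub> t \<otimes>\<^bsub>A\<^esub> (t \<otimes>\<^bsub>M\<^esub> x)"
    using lamA[OF u, of t x] bb t x S_carr by auto
  then show "brace_lambda A M b x \<in> S"
    using t x SA SM by (simp add: subgroup.m_closed subgroup.m_inv_closed)
qed

lemma cosS: assumes t: "t \<in> S" and y: "y \<in> carrier A"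
  shows "r_coset A S (t \<otimes>\<^bsub>A\<^esub> y) = r_coset A S y"
proof -
  have tc: "t \<in> carrier A" using t S_carr by auto
  have "r_coset A S (t \<otimes>\<^bsub>A\<^esub> y) = r_coset A (r_coset A S t) y"
    using A.coset_mult_assoc[OF S_carr tc y] by simp
  also have "r_coset A S t = S" using subgroup.rcos_const[OF SA A.is_group t] .
  finally show ?thesis .
qed

lemma cosC: assumes u: "C u" shows "r_coset M S u = r_coset A S u"
proof -
  have e: "\<And>h. h \<in> S \<Longrightarrow> h \<otimes>\<^bsub>M\<^esub> u = h \<otimes>\<^bsub>A\<^esub> u" using C_MA'[OF u] S_carr by auto
  show ?thesis unfolding r_coset_def using e by simp
qed

lemma coset_eq: assumes b: "b \<in> carrier A" shows "r_coset M S b = r_coset A S b"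
proof -
  obtain t u where t: "t \<in> S" and u: "C u" and bb: "b = t \<otimes>\<^bsub>A\<^esub> u" using decompC[OF b] by blast
  have tc: "t \<in> carrier A" using t S_carr by auto
  have uc: "u \<in> carrier A" using u C_carr by auto
  have bM: "b = t \<otimes>\<^bsub>M\<^esub> u" using bb C_MA'[OF u tc] by simp
  have "r_coset M S b = r_coset M (r_coset M S t) u"
    using M.coset_mult_assoc[of S t u] S_carr carr tc uc bM by simp
  also have "r_coset M S t = S" using subgroup.rcos_const[OF SM M.is_group t] .
  also have "r_coset M S u = r_coset A S u" using cosC[OF u] .
  also have "\<dots> = r_coset A S b" using cosS[OF t uc] bb by simp
  finally show ?thesis .
qed

lemma prod_cos: assumes a: "a \<in> carrier A" and b: "b \<in> carrier A"
  shows "r_coset A S (a \<otimes>\<^bsub>M\<^esub> b) = r_coset A S (a \<otimes>\<^bsub>A\<^esub> b)"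
    "r_coset A S (a \<otimes>\<^bsub>A\<^esub> b) = r_coset A S (b \<otimes>\<^bsub>A\<^esub> a)"
proof -
  obtain t u where t: "t \<in> S" and u: "C u" and aa: "a = t \<otimes>\<^bsub>A\<^esub> u" using decompC[OF a] by blast
  obtain t' v where t': "t' \<in> S" and v: "C v" and bb: "b = t' \<otimes>\<^bsub>A\<^esub> v" using decompC[OF b] by blast
  have tc: "t \<in> carrier A" "t' \<in> carrier A" using t t' S_carr by auto
  have uv: "u \<otimes>\<^bsub>A\<^esub> v \<in> carrier A" using C_carr[OF C_mult[OF u v]] .
  have vu: "v \<otimes>\<^bsub>A\<^esub> u = u \<otimes>\<^bsub>A\<^esub> v" using C_Acomm[OF v C_carr[OF u]] by simp
  have 1: "r_coset A S (a \<otimes>\<^bsub>M\<^esub> b) = r_coset A S (u \<otimes>\<^bsub>A\<^esub> v)"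
    using MM[OF u v tc] aa bb cosS[OF subgroup.m_closed[OF SM t t'] uv] by simp
  have 2: "r_coset A S (a \<otimes>\<^bsub>A\<^esub> b) = r_coset A S (u \<otimes>\<^bsub>A\<^esub> v)"
    using AA[OF u v tc] aa bb cosS[OF subgroup.m_closed[OF SA t t'] uv] by simp
  have 3: "r_coset A S (b \<otimes>\<^bsub>A\<^esub> a) = r_coset A S (u \<otimes>\<^bsub>A\<^esub> v)"
    using AA[OF v u tc(2) tc(1)] aa bb cosS[OF subgroup.m_closed[OF SA t' t] uv] vu by simp
  show "r_coset A S (a \<otimes>\<^bsub>M\<^esub> b) = r_coset A S (a \<otimes>\<^bsub>A\<^esub> b)" using 1 2 by simp
  show "r_coset A S (a \<otimes>\<^bsub>A\<^esub> b) = r_coset A S (b \<otimes>\<^bsub>A\<^esub> a)" using 2 3 by simp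
qed

lemma QA_mult: "a \<in> carrier A \<Longrightarrow> b \<in> carrier A \<Longrightarrow>
  r_coset A S a \<otimes>\<^bsub>A Mod S\<^esub> r_coset A S b = r_coset A S (a \<otimes>\<^bsub>A\<^esub> b)"
  by (simp add: normal.rcos_sum[OF nA])

lemma QM_mult: assumes a: "a \<in> carrier A" and b: "b \<in> carrier A" shows
  "r_coset A S a \<otimes>\<^bsub>M Mod S\<^esub> r_coset A S b = r_coset A S (a \<otimes>\<^bsub>A\<^esub> b)"
proof -
  have "r_coset A S a \<otimes>\<^bsub>M Mod S\<^esub> r_coset A S b = r_coset M S (a \<otimes>\<^bsub>M\<^esub> b)"
    using coset_eq[OF a, symmetric] coset_eq[OF b, symmetric] normal.rcos_sum[OF nM] a b carr by simp
  also have "\<dots> = r_coset A S (a \<otimes>\<^bsub>M\<^esub> b)" using coset_eq a b carr M.m_closed by simp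
  also have "\<dots> = r_coset A S (a \<otimes>\<^bsub>A\<^esub> b)" using prod_cos[OF a b] by simp
  finally show ?thesis .
qed

lemma QA_group: "group (A Mod S)" using normal.factorgroup_is_group[OF nA] .
lemma QM_group: "group (M Mod S)" using normal.factorgroup_is_group[OF nM] .

lemma Q_carr: "carrier (M Mod S) = carrier (A Mod S)"
  unfolding carrier_FactGroup using coset_eq carr by (auto simp: image_def)

lemma Q_ops: assumes U: "U \<in> carrier (A Mod S)" and V: "V \<in> carrier (A Mod S)"
  shows "U \<otimes>\<^bsub>M Mod S\<^esub> V = U \<otimes>\<^bsub>A Mod S\<^esub> V" "U \<otimes>\<^bsub>A Mod S\<^esub> V = V \<otimes>\<^bsub>A Mod S\<^esub> U"
proof -
  obtain a where a: "a \<in> carrier A" and Xa: "U = r_coset A S a" using U unfolding carrier_FactGroup by blast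
  obtain b where b: "b \<in> carrier A" and Yb: "V = r_coset A S b" using V unfolding carrier_FactGroup by blast
  show "U \<otimes>\<^bsub>M Mod S\<^esub> V = U \<otimes>\<^bsub>A Mod S\<^esub> V" using QM_mult[OF a b] QA_mult[OF a b] Xa Yb by simp
  show "U \<otimes>\<^bsub>A Mod S\<^esub> V = V \<otimes>\<^bsub>A Mod S\<^esub> U" using QA_mult[OF a b] QA_mult[OF b a] prod_cos(2)[OF a b] Xa Yb by simp
qed

lemma abel: "abelian_brace (A Mod S) (M Mod S)"
proof -
  interpret Q: comm_group "A Mod S"
    using group.group_comm_groupI[OF QA_group] Q_ops(2) by blast
  have "skew_brace (A Mod S) (M Mod S)"
    unfolding skew_brace_def
  proof (intro conjI QA_group QM_group Q_carr[symmetric] ballI)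
    fix U V W assume U: "U \<in> carrier (A Mod S)" and V: "V \<in> carrier (A Mod S)" and W: "W \<in> carrier (A Mod S)"
    have l: "U \<otimes>\<^bsub>M Mod S\<^esub> (V \<otimes>\<^bsub>A Mod S\<^esub> W) = U \<otimes>\<^bsub>A Mod S\<^esub> (V \<otimes>\<^bsub>A Mod S\<^esub> W)"
      using Q_ops(1)[OF U Q.m_closed[OF V W]] by simp
    have "(U \<otimes>\<^bsub>A Mod S\<^esub> V) \<otimes>\<^bsub>A Mod S\<^esub> inv\<^bsub>A Mod S\<^esub> U = V"
      using U V by (metis Q.m_comm Q.m_assoc Q.r_inv Q.r_one Q.inv_closed)
    then have r: "((U \<otimes>\<^bsub>M Mod S\<^esub> V) \<otimes>\<^bsub>A Mod S\<^esub> inv\<^bsub>A Mod S\<^esub> U) \<otimes>\<^bsub>A Mod S\<^esub> (U \<otimes>\<^bsub>M Mod S\<^esub> W)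
       = V \<otimes>\<^bsub>A Mod S\<^esub> (U \<otimes>\<^bsub>A Mod S\<^esub> W)"
      using Q_ops(1)[OF U V] Q_ops(1)[OF U W] by simp
    show "U \<otimes>\<^bsub>M Mod S\<^esub> (V \<otimes>\<^bsub>A Mod S\<^esub> W) =
       ((U \<otimes>\<^bsub>M Mod S\<^esub> V) \<otimes>\<^bsub>A Mod S\<^esub> inv\<^bsub>A Mod S\<^esub> U) \<otimes>\<^bsub>A Mod S\<^esub> (U \<otimes>\<^bsub>M Mod S\<^esub> W)"
      using l r U V W Q.m_lcomm by simp
  qed
  then show ?thesis unfolding abelian_brace_def using Q_ops by blast
qed

lemma Qcarr_pow: "carrier (A Mod S) = (\<lambda>k. r_coset A S (z [^]\<^bsub>A\<^esub> k)) ` {..<m}"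
proof
  show "carrier (A Mod S) \<subseteq> (\<lambda>k. r_coset A S (z [^]\<^bsub>A\<^esub> k)) ` {..<m}"
  proof
    fix U assume "U \<in> carrier (A Mod S)"
    then obtain a where a: "a \<in> carrier A" and Ua: "U = r_coset A S a" unfolding carrier_FactGroup by blast
    obtain t k where t: "t \<in> S" and k: "k < m" and aa: "a = t \<otimes>\<^bsub>A\<^esub> z [^]\<^bsub>A\<^esub> k" using decomp[OF a] by blast
    have "U = r_coset A S (z [^]\<^bsub>A\<^esub> k)" using Ua aa cosS[OF t] zc by simp
    then show "U \<in> (\<lambda>k. r_coset A S (z [^]\<^bsub>A\<^esub> k)) ` {..<m}" using k by blast
  qed
  show "(\<lambda>k. r_coset A S (z [^]\<^bsub>A\<^esub> k)) ` {..<m} \<subseteq> carrier (A Mod S)"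
    unfolding carrier_FactGroup using zc by auto
qed

lemma cos_neq: assumes ij: "i < j" and jm: "j < m"
  shows "r_coset A S (z [^]\<^bsub>A\<^esub> i) \<noteq> r_coset A S (z [^]\<^bsub>A\<^esub> (j::nat))"
proof
  assume eq: "r_coset A S (z [^]\<^bsub>A\<^esub> i) = r_coset A S (z [^]\<^bsub>A\<^esub> j)"
  have "z [^]\<^bsub>A\<^esub> j \<in> r_coset A S (z [^]\<^bsub>A\<^esub> j)" using A.rcos_self[OF _ SA] zc by simp
  then have "z [^]\<^bsub>A\<^esub> j \<in> r_coset A S (z [^]\<^bsub>A\<^esub> i)" using eq by simp
  then obtain h where h: "h \<in> S" and hj: "z [^]\<^bsub>A\<^esub> j = h \<otimes>\<^bsub>A\<^esub> z [^]\<^bsub>A\<^esub> i"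
    unfolding r_coset_def by blast
  have "z [^]\<^bsub>A\<^esub> j = z [^]\<^bsub>A\<^esub> (j - i) \<otimes>\<^bsub>A\<^esub> z [^]\<^bsub>A\<^esub> i"
    using A.nat_pow_mult[OF zc, of "j - i" i] ij by simp
  then have "z [^]\<^bsub>A\<^esub> (j - i) = h" using hj h S_carr zc by auto
  then have "m dvd (j - i)" using h m_dvd by simp
  moreover have "0 < j - i" "j - i < m" using ij jm by auto
  ultimately show False using dvd_imp_le by fastforce
qed

lemma inj_pow: "inj_on (\<lambda>k. r_coset A S (z [^]\<^bsub>A\<^esub> k)) {..<m}"
proof (rule inj_onI)
  fix i j assume i: "i \<in> {..<m}" and j: "j \<in> {..<m}"
    and eq: "r_coset A S (z [^]\<^bsub>A\<^esub> i) = r_coset A S (z [^]\<^bsub>A\<^esub> (j::nat))"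
  show "i = j"
  proof (rule linorder_cases[of i j])
    assume "i < j" then show ?thesis using cos_neq[of i j] j eq by auto
  next
    assume "j < i" then show ?thesis using cos_neq[of j i] i eq by auto
  qed
qed

lemma order_Q: "order (A Mod S) = m"
  unfolding order_def Qcarr_pow using card_image[OF inj_pow] by simp

lemma cyc: "cyclic_group (A Mod S)"
proof -
  interpret Q: group "A Mod S" using QA_group .
  let ?U = "r_coset A S z"
  have m1: "1 < m" using m_prime prime_gt_1_nat by blast
  have U: "?U \<in> carrier (A Mod S)" unfolding carrier_FactGroup using zc by auto
  have "r_coset A S (z [^]\<^bsub>A\<^esub> (0::nat)) \<noteq> r_coset A S (z [^]\<^bsub>A\<^esub> (1::nat))"
    using cos_neq[of 0 1] m1 by simp
  then have "?U \<noteq> \<one>\<^bsub>A Mod S\<^esub>" using S_carr zc by simp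
  then have o1: "Q.ord ?U \<noteq> 1" using Q.ord_eq_1[OF U] by simp
  have "Q.ord ?U dvd m" using Q.ord_dvd_group_order[OF U] order_Q by simp
  then have om: "Q.ord ?U = m" using o1 m_prime unfolding prime_nat_iff by blast
  have fin: "finite (carrier (A Mod S))" using Qcarr_pow by simp
  have sub: "generate (A Mod S) {?U} \<subseteq> carrier (A Mod S)" using Q.generate_incl U by simp
  have "card (generate (A Mod S) {?U}) = card (carrier (A Mod S))"
    using Q.generate_pow_card[OF U] om order_Q unfolding order_def by simp
  then have g: "generate (A Mod S) {?U} = carrier (A Mod S)" using card_subset_eq[OF fin sub] by simp
  have "subgroup_generated (A Mod S) {?U} = A Mod S"
    unfolding subgroup_generated_def using g U by simp
  then show ?thesis unfolding cyclic_group_def using U by blast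
qed

end

theorem theorem4p7:
  fixes A M :: "'a monoid" and S :: "'a set"
  assumes "skew_brace A M"
    and "finite (carrier A)"
    and "maximal_subbrace S A M"
  shows "brace_centre A M \<subseteq> S \<or>
         (brace_ideal S A M \<and> abelian_brace (A Mod S) (M Mod S) \<and>
          cyclic_group (A Mod S) \<and> Factorial_Ring.prime (order (A Mod S)))"
proof (cases "brace_centre A M \<subseteq> S")
  case True then show ?thesis by simp
next
  case False
  then obtain z where zc: "z \<in> brace_centre A M" and zS: "z \<notin> S" by blast
  have gA: "group A" and gM: "group M" and carr: "carrier M = carrier A"
    using assms(1) unfolding skew_brace_def by auto
  have sb: "subgroup S A" "subgroup S M" and nB: "S \<noteq> carrier A"
    and mx: "\<And>U. subgroup U A \<Longrightarrow> subgroup U M \<Longrightarrow> U \<noteq> carrier A \<Longrightarrow> S \<subseteq> U \<Longrightarrow> U = S"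
    using assms(3) unfolding maximal_subbrace_def subbrace_def by blast+
  interpret bra A M unfolding bra_def bra_axioms_def using gA gM carr by blast
  have zcar: "z \<in> carrier A" and P: "\<forall>b\<in>carrier A. z \<otimes>\<^bsub>A\<^esub> b = b \<otimes>\<^bsub>A\<^esub> z \<and>
      b \<otimes>\<^bsub>A\<^esub> z = z \<otimes>\<^bsub>M\<^esub> b \<and> z \<otimes>\<^bsub>M\<^esub> b = b \<otimes>\<^bsub>M\<^esub> z"
    using zc unfolding brace_centre_def by blast+
  have Cz: "C z" unfolding C_def
  proof (intro conjI ballI zcar)
    fix b assume b: "b \<in> carrier A"
    note Pb = P[rule_format, OF b]
    show "z \<otimes>\<^bsub>A\<^esub> b = b \<otimes>\<^bsub>A\<^esub> z" using Pb by blast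
    show "z \<otimes>\<^bsub>M\<^esub> b = z \<otimes>\<^bsub>A\<^esub> b" using Pb by metis
    show "z \<otimes>\<^bsub>M\<^esub> b = b \<otimes>\<^bsub>M\<^esub> z" using Pb by blast
  qed
  interpret braZ A M S z
    unfolding braZ_def braS_def braZ_axioms_def braS_axioms_def
    using assms(2) sb mx Cz zS bra_axioms by blast
  show ?thesis using ideal abel cyc order_Q m_prime by simp
qed

end
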